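(* Let $\Phi\in C_c^2(\mathbb R)$ be positive, $k(Z,Z')=\Phi(u(Z,Z'))$, let $P(v)=\int_v^\infty\Phi(u)\arccos\big(\frac{1-u+2v}{1+u}\big)du$ and $g(\eta)=P(\frac14(e^\eta+e^{-\eta}-2))$. For $a\in\mathbb C$, $b\in\mathbb R$ put $$n(a,b)=\begin{pmatrix}1&a&\frac{|a|^2}{2}+ib\\0&1&\bar a\\0&0&1\end{pmatrix}.$$ Then for $Z,Z'\in\mathfrak S_2$, $$\int_{\mathbb R}\int_{\mathbb C}k(Z,n(a,b)Z')\,da\,d\bar a\,db=2\pi\rho\rho'\,g(\log\rho'-\log\rho),$$ where $\rho=\rho(Z)$, $\rho'=\rho(Z')$.
   Context: $\mathfrak S_2=\{(z_1,z_2)\in\mathbb C^2: z_1+\bar z_1-z_2\bar z_2>0\}$, on which $3\times3$ matrices $g=(g_{ij})$ in $SU(2,1)$ act by $g(z_1,z_2)=\big(\frac{g_{11}z_1+g_{12}z_2+g_{13}}{g_{31}z_1+g_{32}z_2+g_{33}},\frac{g_{21}z_1+g_{22}z_2+g_{23}}{g_{31}z_1+g_{32}z_2+g_{33}}\big)$ (so $n(a,b)(z_1,z_2)=(z_1+az_2+\frac{|a|^2}{2}+ib,\ z_2+\bar a)$). $\rho(Z,W)=\bar z_1+w_1-\bar z_2w_2$, $\rho(Z)=\rho(Z,Z)$, $u(Z,W)=\frac{|\rho(Z,W)|^2}{\rho(Z)\rho(W)}-1$. *)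

theory Defs
  imports "HOL-Analysis.Analysis"
begin

type_synonym pt = "complex \<times> complex"

definition Siegel2 :: "pt set" where
  "Siegel2 = {(z1, z2). Re (z1 + cnj z1 - z2 * cnj z2) > 0}"

definition rhoZW :: "pt \<Rightarrow> pt \<Rightarrow> complex" where
  "rhoZW Z W = cnj (fst Z) + fst W - cnj (snd Z) * snd W"

definition rhoZ :: "pt \<Rightarrow> real" where
  "rhoZ Z = Re (rhoZW Z Z)"

definition uZW :: "pt \<Rightarrow> pt \<Rightarrow> real" where
  "uZW Z W = (cmod (rhoZW Z W))\<^sup>2 / (rhoZ Z * rhoZ W) - 1"

text \<open>Action of the matrix n(a,b) by linear fractional transformation (third row is (0,0,1)).\<close>
definition nact :: "complex \<Rightarrow> real \<Rightarrow> pt \<Rightarrow> pt" where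
  "nact a b Z = (fst Z + a * snd Z + complex_of_real ((cmod a)\<^sup>2 / 2) + \<i> * complex_of_real b,
                 snd Z + cnj a)"

definition C2c :: "(real \<Rightarrow> real) \<Rightarrow> bool" where
  "C2c \<Phi> \<longleftrightarrow> (\<exists>\<Phi>' \<Phi>''. (\<forall>x. (\<Phi> has_real_derivative \<Phi>' x) (at x))
                    \<and> (\<forall>x. (\<Phi>' has_real_derivative \<Phi>'' x) (at x))
                    \<and> continuous_on UNIV \<Phi>'')
            \<and> compact (closure {x. \<Phi> x \<noteq> 0})"

definition kern :: "(real \<Rightarrow> real) \<Rightarrow> pt \<Rightarrow> pt \<Rightarrow> real" where
  "kern \<Phi> Z W = \<Phi> (uZW Z W)"

definition Pfun :: "(real \<Rightarrow> real) \<Rightarrow> real \<Rightarrow> real" where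
  "Pfun \<Phi> v = (LBINT u:{v..}. \<Phi> u * arccos ((1 - u + 2 * v) / (1 + u)))"

definition gfun :: "(real \<Rightarrow> real) \<Rightarrow> real \<Rightarrow> real" where
  "gfun \<Phi> \<eta> = Pfun \<Phi> ((exp \<eta> + exp (- \<eta>) - 2) / 4)"

end

theory Submission
  imports Defs "HOL-Analysis.Analysis"
begin

lemma sq_subst:
  fixes f :: "real \<Rightarrow> ennreal" and a :: real
  assumes [measurable]: "f \<in> borel_measurable borel" and a: "0 \<le> a"
  shows "(\<integral>\<^sup>+x. f (x\<^sup>2) * ennreal (2*x) * indicator {a..} x \<partial>lborel)
       = (\<integral>\<^sup>+w. f w * indicator {a\<^sup>2..} w \<partial>lborel)"
proof -
  have eq: "(\<integral>\<^sup>+x. f x * indicator {a\<^sup>2..(a + real n + 1)\<^sup>2} x \<partial>lborel) =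
        (\<integral>\<^sup>+x. f (x\<^sup>2) * ennreal (2*x) * indicator {a..a + real n + 1} x \<partial>lborel)" for n
    by (rule nn_integral_substitution_aux[OF assms(1), of a "a + real n + 1" "\<lambda>x. x\<^sup>2" "\<lambda>x. 2*x"])
       (use a in \<open>auto intro!: derivative_eq_intros continuous_intros\<close>)
  have inc1: "incseq (\<lambda>n x. f x * indicator {a\<^sup>2..(a + real n + 1)\<^sup>2} x :: ennreal)"
  proof (intro incseq_SucI le_funI)
    fix n x
    have "(a + real n + 1)\<^sup>2 \<le> (a + real (Suc n) + 1)\<^sup>2" using a by (intro power_mono) auto
    then show "f x * indicator {a\<^sup>2..(a + real n + 1)\<^sup>2} x \<le> f x * indicator {a\<^sup>2..(a + real (Suc n) + 1)\<^sup>2} x"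
      by (auto intro!: mult_left_mono split: split_indicator)
  qed
  have inc2: "incseq (\<lambda>n x. f (x\<^sup>2) * ennreal (2*x) * indicator {a..a + real n + 1} x :: ennreal)"
    by (intro incseq_SucI le_funI) (auto intro!: mult_left_mono split: split_indicator)
  have sup1: "(SUP n. f x * indicator {a\<^sup>2..(a + real n + 1)\<^sup>2} x) = f x * indicator {a\<^sup>2..} x" for x
  proof (cases "a\<^sup>2 \<le> x")
    case True
    obtain n :: nat where n: "sqrt x \<le> real n" using real_arch_simple by blast
    have "x \<le> (a + real n + 1)\<^sup>2"
    proof -
      have x0: "0 \<le> x" using True by (meson order.trans zero_le_power2)
      have "sqrt x \<le> a + real n + 1" using n a by linarith
      then have "(sqrt x)\<^sup>2 \<le> (a + real n + 1)\<^sup>2" using x0 by (intro power_mono) auto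
      then show ?thesis using x0 by simp
    qed
    then have "f x * indicator {a\<^sup>2..(a + real n + 1)\<^sup>2} x = f x * indicator {a\<^sup>2..} x" using True by auto
    moreover have "f x * indicator {a\<^sup>2..(a + real m + 1)\<^sup>2} x \<le> f x * indicator {a\<^sup>2..} x" for m
      by (auto split: split_indicator)
    ultimately show ?thesis by (intro antisym SUP_least) (auto intro: SUP_upper2[where i=n])
  qed auto
  have sup2: "(SUP n. f (x\<^sup>2) * ennreal (2*x) * indicator {a..a + real n + 1} x) = f (x\<^sup>2) * ennreal (2*x) * indicator {a..} x" for x
  proof (cases "a \<le> x")
    case True
    obtain n :: nat where n: "x \<le> real n" using real_arch_simple by blast
    then have "f (x\<^sup>2) * ennreal (2*x) * indicator {a..a + real n + 1} x = f (x\<^sup>2) * ennreal (2*x) * indicator {a..} x" using True a by auto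
    moreover have "f (x\<^sup>2) * ennreal (2*x) * indicator {a..a + real m + 1} x \<le> f (x\<^sup>2) * ennreal (2*x) * indicator {a..} x" for m
      by (auto split: split_indicator)
    ultimately show ?thesis by (intro antisym SUP_least) (auto intro: SUP_upper2[where i=n])
  qed auto
  have "(\<integral>\<^sup>+w. f w * indicator {a\<^sup>2..} w \<partial>lborel) = (SUP n. \<integral>\<^sup>+x. f x * indicator {a\<^sup>2..(a + real n + 1)\<^sup>2} x \<partial>lborel)"
    unfolding sup1[symmetric] by (rule nn_integral_monotone_convergence_SUP[OF inc1]) measurable
  also have "\<dots> = (SUP n. \<integral>\<^sup>+x. f (x\<^sup>2) * ennreal (2*x) * indicator {a..a + real n + 1} x \<partial>lborel)"
    using eq by simp
  also have "\<dots> = (\<integral>\<^sup>+x. f (x\<^sup>2) * ennreal (2*x) * indicator {a..} x \<partial>lborel)"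
    unfolding sup2[symmetric] by (rule nn_integral_monotone_convergence_SUP[OF inc2, symmetric]) measurable
  finally show ?thesis ..
qed

lemma ind_atLeast: "indicator {a..} x = (if a \<le> x then 1 else (0::ennreal))"
  by (simp split: split_indicator)

lemma nn_even:
  fixes g :: "real \<Rightarrow> ennreal"
  assumes [measurable]: "g \<in> borel_measurable borel" and ev: "\<And>x. g (-x) = g x"
  shows "(\<integral>\<^sup>+x. g x \<partial>lborel) = 2 * (\<integral>\<^sup>+x. g x * indicator {0..} x \<partial>lborel)"
proof -
  have "(\<integral>\<^sup>+x. g x \<partial>lborel) = (\<integral>\<^sup>+x. g x * indicator {0..} x + g x * indicator {..<0} x \<partial>lborel)"
    by (intro nn_integral_cong) (auto split: split_indicator)
  also have "\<dots> = (\<integral>\<^sup>+x. g x * indicator {0..} x \<partial>lborel) + (\<integral>\<^sup>+x. g x * indicator {..<0} x \<partial>lborel)"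
    by (rule nn_integral_add) auto
  also have "(\<integral>\<^sup>+x. g x * indicator {..<0} x \<partial>lborel) = (\<integral>\<^sup>+x. g (0 + (-1) * x) * indicator {..<0} (0 + (-1) * x) \<partial>lborel)"
    by (subst nn_integral_real_affine[of _ "-1" 0]) auto
  also have "\<dots> = (\<integral>\<^sup>+x. g x * indicator {0..} x \<partial>lborel)"
    using AE_lborel_singleton[of 0]
    by (intro nn_integral_cong_AE) (auto simp: ev split: split_indicator elim!: eventually_mono)
  finally show ?thesis by (simp add: mult_2)
qed

lemma arc1:
  assumes "0 \<le> \<sigma>"
  shows "(\<integral>\<^sup>+s. ennreal (1/(1+s\<^sup>2)) * indicator {-\<sigma>..\<sigma>} s \<partial>lborel) = ennreal (2 * arctan \<sigma>)"
proof -
  have "(\<integral>\<^sup>+s. ennreal (1/(1+s\<^sup>2)) * indicator {-\<sigma>..\<sigma>} s \<partial>lborel) = arctan \<sigma> - arctan (-\<sigma>)"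
    by (rule nn_integral_FTC_Icc) (use assms in \<open>auto intro!: derivative_eq_intros simp: field_simps add_pos_nonneg\<close>)
  then show ?thesis by (simp add: arctan_minus)
qed

lemma arc2: "(\<integral>\<^sup>+s. ennreal (1/(1+s\<^sup>2)) \<partial>lborel) = ennreal pi"
proof -
  have "(\<integral>\<^sup>+s. ennreal (1/(1+s\<^sup>2)) * indicator {0..} s \<partial>lborel) = pi/2 - arctan 0"
    by (rule nn_integral_FTC_atLeast[where F=arctan])
       (auto intro!: derivative_eq_intros tendsto_arctan_at_top simp: field_simps add_pos_nonneg)
  moreover have "2 * ennreal (pi/2) = ennreal pi"
    using ennreal_mult[of 2 "pi/2"] by simp
  ultimately show ?thesis
    by (subst nn_even) auto
qed

lemma half2:
  fixes \<psi> :: "real \<Rightarrow> ennreal"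
  assumes [measurable]: "\<psi> \<in> borel_measurable borel" and t0: "0 \<le> t0"
  shows "2 * (\<integral>\<^sup>+t. indicator {t0..} t * (\<integral>\<^sup>+b. \<psi> (t\<^sup>2 + b\<^sup>2) \<partial>lborel) \<partial>lborel)
     = (\<integral>\<^sup>+w. \<psi> w * (\<integral>\<^sup>+s. ennreal (1/(1+s\<^sup>2)) * indicator {t0\<^sup>2 * (1+s\<^sup>2)..} w \<partial>lborel) \<partial>lborel)"
proof -
  have step1: "(\<integral>\<^sup>+t. indicator {t0..} t * (\<integral>\<^sup>+b. \<psi> (t\<^sup>2 + b\<^sup>2) \<partial>lborel) \<partial>lborel)
     = (\<integral>\<^sup>+t. (\<integral>\<^sup>+s. indicator {t0..} t * ennreal t * \<psi> (t\<^sup>2 * (1 + s\<^sup>2)) \<partial>lborel) \<partial>lborel)"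
  proof -
    have pt: "indicator {t0..} t * (\<integral>\<^sup>+b. \<psi> (t\<^sup>2 + b\<^sup>2) \<partial>lborel)
       = (\<integral>\<^sup>+s. indicator {t0..} t * ennreal t * \<psi> (t\<^sup>2 * (1 + s\<^sup>2)) \<partial>lborel)" if "t \<noteq> 0" for t
    proof (cases "t0 \<le> t")
      case True
      then have tp: "0 < t" using t0 \<open>t \<noteq> 0\<close> by auto
      have "(\<integral>\<^sup>+b. \<psi> (t\<^sup>2 + b\<^sup>2) \<partial>lborel) = ennreal t * (\<integral>\<^sup>+s. \<psi> (t\<^sup>2 + (0 + t * s)\<^sup>2) \<partial>lborel)"
        using nn_integral_real_affine[of "\<lambda>b. \<psi> (t\<^sup>2 + b\<^sup>2)" t 0] tp by auto
      also have "\<dots> = (\<integral>\<^sup>+s. ennreal t * \<psi> (t\<^sup>2 * (1 + s\<^sup>2)) \<partial>lborel)"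
        by (subst nn_integral_cmult) (auto simp: algebra_simps power_mult_distrib)
      finally show ?thesis using True by simp
    qed simp
    show ?thesis
      using AE_lborel_singleton[of 0] by (intro nn_integral_cong_AE) (auto elim!: eventually_mono simp: pt)
  qed
  have "2 * (\<integral>\<^sup>+t. indicator {t0..} t * (\<integral>\<^sup>+b. \<psi> (t\<^sup>2 + b\<^sup>2) \<partial>lborel) \<partial>lborel)
     = 2 * (\<integral>\<^sup>+s. (\<integral>\<^sup>+t. indicator {t0..} t * ennreal t * \<psi> (t\<^sup>2 * (1 + s\<^sup>2)) \<partial>lborel) \<partial>lborel)"
    unfolding step1 by (subst lborel_pair.Fubini') (auto simp: case_prod_beta)
  also have "\<dots> = (\<integral>\<^sup>+s. 2 * (\<integral>\<^sup>+t. indicator {t0..} t * ennreal t * \<psi> (t\<^sup>2 * (1 + s\<^sup>2)) \<partial>lborel) \<partial>lborel)"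
    by (subst nn_integral_cmult) auto
  also have "\<dots> = (\<integral>\<^sup>+s. (\<integral>\<^sup>+w. ennreal (1/(1+s\<^sup>2)) * \<psi> w * indicator {t0\<^sup>2 * (1+s\<^sup>2)..} w \<partial>lborel) \<partial>lborel)"
  proof (intro nn_integral_cong)
    fix s :: real
    define c where "c = 1 + s\<^sup>2"
    have c: "0 < c" unfolding c_def by (simp add: add_pos_nonneg)
    have "2 * (\<integral>\<^sup>+t. indicator {t0..} t * ennreal t * \<psi> (t\<^sup>2 * c) \<partial>lborel)
        = (\<integral>\<^sup>+t. \<psi> (c * t\<^sup>2) * ennreal (2*t) * indicator {t0..} t \<partial>lborel)"
    proof -
      have e2: "ennreal (x*2) = ennreal x * 2" if "0 \<le> x" for x :: real
        using ennreal_mult[of x 2] that by simp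
      show ?thesis
        using t0 by (subst nn_integral_cmult[symmetric]) (auto intro!: nn_integral_cong simp: e2 mult_ac split: split_indicator)
    qed
    also have "\<dots> = (\<integral>\<^sup>+w. \<psi> (c * w) * indicator {t0\<^sup>2..} w \<partial>lborel)"
      by (rule sq_subst[OF _ t0]) measurable
    also have "\<dots> = ennreal (1/c) * (ennreal c * (\<integral>\<^sup>+w. \<psi> (0 + c * w) * indicator {t0\<^sup>2 * c..} (0 + c * w) \<partial>lborel))"
    proof -
      have "(\<integral>\<^sup>+w. \<psi> (c * w) * indicator {t0\<^sup>2..} w \<partial>lborel) = (\<integral>\<^sup>+w. \<psi> (0 + c * w) * indicator {t0\<^sup>2 * c..} (0 + c * w) \<partial>lborel)"
        using c by (auto intro!: nn_integral_cong split: split_indicator)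
      moreover have "ennreal (1/c) * (ennreal c * X) = X" for X
        using c by (simp add: mult.assoc[symmetric] ennreal_mult[symmetric])
      ultimately show ?thesis by simp
    qed
    also have "\<dots> = ennreal (1/c) * (\<integral>\<^sup>+w. \<psi> w * indicator {t0\<^sup>2 * c..} w \<partial>lborel)"
      using nn_integral_real_affine[of "\<lambda>w. \<psi> w * indicator {t0\<^sup>2 * c..} w" c 0] c by simp
    also have "\<dots> = (\<integral>\<^sup>+w. ennreal (1/c) * \<psi> w * indicator {t0\<^sup>2 * c..} w \<partial>lborel)"
      by (subst nn_integral_cmult[symmetric]) (auto simp: mult_ac)
    finally show "2 * (\<integral>\<^sup>+t. indicator {t0..} t * ennreal t * \<psi> (t\<^sup>2 * (1 + s\<^sup>2)) \<partial>lborel)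
       = (\<integral>\<^sup>+w. ennreal (1/(1+s\<^sup>2)) * \<psi> w * indicator {t0\<^sup>2 * (1+s\<^sup>2)..} w \<partial>lborel)"
      unfolding c_def .
  qed
  also have "\<dots> = (\<integral>\<^sup>+w. (\<integral>\<^sup>+s. ennreal (1/(1+s\<^sup>2)) * \<psi> w * indicator {t0\<^sup>2 * (1+s\<^sup>2)..} w \<partial>lborel) \<partial>lborel)"
  proof (rule lborel_pair.Fubini')
    have "(\<lambda>(w, s). ennreal (1/(1+s\<^sup>2)) * \<psi> w * (if t0\<^sup>2 * (1+s\<^sup>2) \<le> w then 1 else 0))
       \<in> borel_measurable (lborel \<Otimes>\<^sub>M lborel)" by measurable
    then show "(\<lambda>(w, s). ennreal (1/(1+s\<^sup>2)) * \<psi> w * indicator {t0\<^sup>2 * (1+s\<^sup>2)..} w)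
       \<in> borel_measurable (lborel \<Otimes>\<^sub>M lborel)"
      by (rule measurable_cong[THEN iffD1, rotated]) (auto split: split_indicator)
  qed
  also have "\<dots> = (\<integral>\<^sup>+w. \<psi> w * (\<integral>\<^sup>+s. ennreal (1/(1+s\<^sup>2)) * indicator {t0\<^sup>2 * (1+s\<^sup>2)..} w \<partial>lborel) \<partial>lborel)"
  proof (intro nn_integral_cong)
    fix w :: real
    have m: "(\<lambda>s. ennreal (1/(1+s\<^sup>2)) * indicator {t0\<^sup>2 * (1+s\<^sup>2)..} w) \<in> borel_measurable lborel"
      unfolding ind_atLeast by measurable
    show "(\<integral>\<^sup>+s. ennreal (1/(1+s\<^sup>2)) * \<psi> w * indicator {t0\<^sup>2 * (1+s\<^sup>2)..} w \<partial>lborel) =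
        \<psi> w * (\<integral>\<^sup>+s. ennreal (1/(1+s\<^sup>2)) * indicator {t0\<^sup>2 * (1+s\<^sup>2)..} w \<partial>lborel)"
      by (subst nn_integral_cmult[symmetric, OF m]) (simp add: mult_ac)
  qed
  finally show ?thesis .
qed

lemma eval_pos:
  assumes t0: "0 < t0"
  shows "(\<integral>\<^sup>+s. ennreal (1/(1+s\<^sup>2)) * indicator {t0\<^sup>2 * (1+s\<^sup>2)..} w \<partial>lborel)
       = (if t0\<^sup>2 \<le> w then ennreal (2 * arctan (sqrt (w / t0\<^sup>2 - 1))) else 0)"
proof (cases "t0\<^sup>2 \<le> w")
  case True
  define \<sigma> where "\<sigma> = sqrt (w / t0\<^sup>2 - 1)"
  have "1 \<le> w / t0\<^sup>2" using True t0 by (simp add: field_simps)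
  then have s2: "\<sigma>\<^sup>2 = w / t0\<^sup>2 - 1" and s0: "0 \<le> \<sigma>" unfolding \<sigma>_def by auto
  have "indicator {t0\<^sup>2 * (1+s\<^sup>2)..} w = (indicator {-\<sigma>..\<sigma>} s :: ennreal)" for s
  proof -
    have "t0\<^sup>2 * (1+s\<^sup>2) \<le> w \<longleftrightarrow> s\<^sup>2 \<le> \<sigma>\<^sup>2"
      using t0 unfolding s2 by (simp add: field_simps)
    also have "\<dots> \<longleftrightarrow> s \<in> {-\<sigma>..\<sigma>}"
      using s0 by (simp add: abs_le_square_iff[symmetric] abs_le_iff) linarith
    finally show ?thesis by (simp split: split_indicator)
  qed
  then show ?thesis using True arc1[OF s0] by (simp add: \<sigma>_def)
next
  case False
  have "\<not> t0\<^sup>2 * (1+s\<^sup>2) \<le> w" for s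
  proof -
    have "t0\<^sup>2 * 1 \<le> t0\<^sup>2 * (1+s\<^sup>2)" by (intro mult_left_mono) auto
    then show ?thesis using False by simp
  qed
  then show ?thesis using False by simp
qed

lemma radial:
  fixes G :: "real \<Rightarrow> ennreal"
  assumes [measurable]: "G \<in> borel_measurable borel"
  shows "(\<integral>\<^sup>+x. (\<integral>\<^sup>+y. G (x\<^sup>2 + y\<^sup>2) \<partial>lborel) \<partial>lborel) = ennreal pi * (\<integral>\<^sup>+w. G w * indicator {0..} w \<partial>lborel)"
proof -
  have "(\<integral>\<^sup>+x. (\<integral>\<^sup>+y. G (x\<^sup>2 + y\<^sup>2) \<partial>lborel) \<partial>lborel)
      = 2 * (\<integral>\<^sup>+x. indicator {0..} x * (\<integral>\<^sup>+y. G (x\<^sup>2 + y\<^sup>2) \<partial>lborel) \<partial>lborel)"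
    by (subst nn_even) (auto simp: mult.commute)
  also have "\<dots> = (\<integral>\<^sup>+w. G w * (\<integral>\<^sup>+s. ennreal (1/(1+s\<^sup>2)) * indicator {0\<^sup>2 * (1+s\<^sup>2)..} w \<partial>lborel) \<partial>lborel)"
    by (rule half2) auto
  also have "\<dots> = (\<integral>\<^sup>+w. ennreal pi * (G w * indicator {0..} w) \<partial>lborel)"
    by (intro nn_integral_cong) (auto simp: arc2 mult.commute split: split_indicator)
  also have "\<dots> = ennreal pi * (\<integral>\<^sup>+w. G w * indicator {0..} w \<partial>lborel)"
    by (rule nn_integral_cmult) measurable
  finally show ?thesis .
qed

lemma cplx_meas: "(\<lambda>p::real\<times>real. Complex (fst p) (snd p)) \<in> borel_measurable (lborel \<Otimes>\<^sub>M lborel)"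
proof -
  have "(\<lambda>p::real\<times>real. complex_of_real (fst p) + \<i> * complex_of_real (snd p)) \<in> borel_measurable (lborel \<Otimes>\<^sub>M lborel)"
    by measurable
  then show ?thesis by (simp add: Complex_eq)
qed

lemma lborel_complex_distr:
  "distr (lborel \<Otimes>\<^sub>M lborel) borel (\<lambda>p::real\<times>real. Complex (fst p) (snd p)) = lborel"
proof (rule lborel_eqI[symmetric])
  fix l u :: complex
  assume le: "\<And>b. b \<in> Basis \<Longrightarrow> l \<bullet> b \<le> u \<bullet> b"
  have l1: "Re l \<le> Re u" and l2: "Im l \<le> Im u" using le[of 1] le[of \<i>] by auto
  have pre: "(\<lambda>p::real\<times>real. Complex (fst p) (snd p)) -` box l u \<inter> space (lborel \<Otimes>\<^sub>M lborel)
       = {Re l<..<Re u} \<times> {Im l<..<Im u}"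
    by (auto simp: box_def Basis_complex_def space_pair_measure)
  have "emeasure (distr (lborel \<Otimes>\<^sub>M lborel) borel (\<lambda>p::real\<times>real. Complex (fst p) (snd p))) (box l u)
      = emeasure (lborel \<Otimes>\<^sub>M lborel) ({Re l<..<Re u} \<times> {Im l<..<Im u})"
    by (subst emeasure_distr) (auto simp: cplx_meas pre)
  also have "\<dots> = ennreal (Re u - Re l) * ennreal (Im u - Im l)"
    using l1 l2 by (simp add: lborel.emeasure_pair_measure_Times)
  also have "\<dots> = (\<Prod>b\<in>Basis. (u - l) \<bullet> b)"
    using l1 l2 by (simp add: Basis_complex_def ennreal_mult)
  finally show "emeasure (distr (lborel \<Otimes>\<^sub>M lborel) borel (\<lambda>p::real\<times>real. Complex (fst p) (snd p))) (box l u)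
      = (\<Prod>b\<in>Basis. (u - l) \<bullet> b)" .
qed simp

lemma nn_integral_complex:
  fixes f :: "complex \<Rightarrow> ennreal"
  assumes [measurable]: "f \<in> borel_measurable borel"
  shows "(\<integral>\<^sup>+z. f z \<partial>lborel) = (\<integral>\<^sup>+x. (\<integral>\<^sup>+y. f (Complex x y) \<partial>lborel) \<partial>lborel)"
proof -
  have "(\<integral>\<^sup>+z. f z \<partial>lborel) = (\<integral>\<^sup>+z. f z \<partial>distr (lborel \<Otimes>\<^sub>M lborel) borel (\<lambda>p::real\<times>real. Complex (fst p) (snd p)))"
    by (simp add: lborel_complex_distr)
  also have "\<dots> = (\<integral>\<^sup>+p. f (Complex (fst p) (snd p)) \<partial>(lborel \<Otimes>\<^sub>M lborel))"
    by (rule nn_integral_distr) (auto simp: cplx_meas)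
  also have "\<dots> = (\<integral>\<^sup>+x. (\<integral>\<^sup>+y. f (Complex x y) \<partial>lborel) \<partial>lborel)"
    by (rule lborel.nn_integral_fst[symmetric, where f = "\<lambda>p. f (Complex (fst p) (snd p))", simplified])
       (rule measurable_compose[OF cplx_meas], measurable)
  finally show ?thesis .
qed

lemma cm2: "cmod z * cmod z = Re z * Re z + Im z * Im z"
  using cmod_power2[of z] by (simp add: power2_eq_square)

lemma borel_measurable_cnj[measurable (raw)]:
  fixes f :: "'a \<Rightarrow> complex"
  assumes "f \<in> borel_measurable M"
  shows "(\<lambda>x. cnj (f x)) \<in> borel_measurable M"
proof -
  have "(cnj :: complex \<Rightarrow> complex) \<in> borel_measurable borel"
    by (intro borel_measurable_continuous_onI continuous_intros)
  from measurable_compose[OF assms this] show ?thesis by (simp add: o_def)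
qed

lemma rho_nact: "rhoZ (nact a b W) = rhoZ W"
  by (cases W) (simp add: rhoZ_def rhoZW_def nact_def power2_eq_square cm2 algebra_simps)

lemma re_rho: "Re (rhoZW Z (nact a b W)) = (rhoZ Z + rhoZ W + (cmod (a + cnj (snd W - snd Z)))\<^sup>2) / 2"
  by (cases Z; cases W) (simp add: rhoZ_def rhoZW_def nact_def power2_eq_square cm2 algebra_simps)

lemma im_rho: "Im (rhoZW Z (nact a b W)) = b + Im (cnj (fst Z) + fst W + a * snd W - cnj (snd Z) * snd W - cnj (snd Z) * cnj a)"
  by (cases Z; cases W) (simp add: rhoZ_def rhoZW_def nact_def power2_eq_square cm2 algebra_simps)

lemma meas_test:
  fixes \<Phi> :: "real \<Rightarrow> real" and Z W :: pt
  assumes [measurable]: "\<Phi> \<in> borel_measurable borel"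
  shows "(\<lambda>(a, b). ennreal (2 * kern \<Phi> Z (nact a b W))) \<in> borel_measurable (lborel \<Otimes>\<^sub>M lborel)"
  unfolding kern_def uZW_def rhoZW_def rhoZ_def nact_def by measurable

lemma arcid:
  fixes q :: real
  assumes "0 < q" "q \<le> 1"
  shows "2 * arctan (sqrt (1/q - 1)) = arccos (2*q - 1)"
proof -
  define \<theta> where "\<theta> = arctan (sqrt (1/q - 1))"
  have t0: "0 \<le> \<theta>" unfolding \<theta>_def using assms by (simp add: field_simps)
  have t1: "\<theta> < pi/2" unfolding \<theta>_def by (rule arctan_ubound)
  have "1/q - 1 \<ge> 0" using assms by (simp add: field_simps)
  then have "cos \<theta> = 1 / sqrt (1/q)" unfolding \<theta>_def by (simp add: cos_arctan)
  then have "(cos \<theta>)\<^sup>2 = q" using assms by (simp add: power_divide real_sqrt_divide)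
  then have "cos (2*\<theta>) = 2*q - 1" by (simp add: cos_double_cos)
  then have "arccos (2*q - 1) = 2*\<theta>" using t0 t1 by (metis arccos_cos mult_nonneg_nonneg zero_le_numeral less_eq_real_def field_sum_of_halves mult_2 add_mono)
  then show ?thesis unfolding \<theta>_def by simp
qed

lemma ennreal_2x: "0 \<le> x \<Longrightarrow> ennreal (2 * x) = 2 * ennreal x"
  using ennreal_mult[of 2 x] by simp

lemma ennreal_2x': "0 \<le> x \<Longrightarrow> 0 \<le> y \<Longrightarrow> ennreal (x * (2 * y)) = 2 * ennreal (x * y)"
  using ennreal_2x[of "x * y"] by (simp add: mult_ac)

lemma arccos_clamp_meas[measurable (raw)]:
  fixes f :: "'a \<Rightarrow> real"
  assumes "f \<in> borel_measurable M"
  shows "(\<lambda>x. arccos (max (-1) (min 1 (f x)))) \<in> borel_measurable M"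
proof -
  have "continuous_on UNIV (\<lambda>x::real. arccos (max (-1) (min 1 x)))"
    by (rule continuous_on_compose2[OF continuous_on_arccos']) (auto intro!: continuous_intros)
  then have "(\<lambda>x::real. arccos (max (-1) (min 1 x))) \<in> borel_measurable borel"
    by (rule borel_measurable_continuous_onI)
  from measurable_compose[OF assms this] show ?thesis by (simp add: o_def)
qed

lemma rng:
  fixes v u :: real
  assumes "-1 < v" "v \<le> u"
  shows "-1 \<le> (1 - u + 2 * v) / (1 + u) \<and> (1 - u + 2 * v) / (1 + u) \<le> 1"
  using assms by (auto simp: field_simps)

lemma meas_real:
  fixes \<Phi> :: "real \<Rightarrow> real"
  assumes [measurable]: "\<Phi> \<in> borel_measurable borel" and v: "-1 < v"
  shows "(\<lambda>u. indicator {v..} u *\<^sub>R (\<Phi> u * arccos ((1 - u + 2 * v) / (1 + u)))) \<in> borel_measurable borel"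
proof -
  have "(\<lambda>u. (if v \<le> u then 1 else 0) * (\<Phi> u * arccos (max (-1) (min 1 ((1 - u + 2 * v) / (1 + u)))))) \<in> borel_measurable borel"
    by measurable
  then show ?thesis
  proof (rule measurable_cong[THEN iffD1, rotated])
    fix u
    show "(if v \<le> u then 1 else 0) * (\<Phi> u * arccos (max (-1) (min 1 ((1 - u + 2 * v) / (1 + u)))))
      = indicator {v..} u *\<^sub>R (\<Phi> u * arccos ((1 - u + 2 * v) / (1 + u)))"
    proof (cases "v \<le> u")
      case True
      then have "max (-1) (min 1 ((1 - u + 2 * v) / (1 + u))) = (1 - u + 2 * v) / (1 + u)"
        using rng[OF v True] by linarith
      then show ?thesis using True by simp
    qed simp
  qed
qed

lemma meas_enn:
  fixes \<Phi> :: "real \<Rightarrow> real"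
  assumes [measurable]: "\<Phi> \<in> borel_measurable borel" and v: "-1 < v"
  shows "(\<lambda>u. ennreal (\<Phi> u * arccos ((1 - u + 2 * v) / (1 + u))) * indicator {v..} u) \<in> borel_measurable borel"
proof -
  have "(\<lambda>u. ennreal (indicator {v..} u *\<^sub>R (\<Phi> u * arccos ((1 - u + 2 * v) / (1 + u))))) \<in> borel_measurable borel"
    using meas_real[OF assms] by measurable
  then show ?thesis
    by (rule measurable_cong[THEN iffD1, rotated]) (auto split: split_indicator)
qed

lemma core_nn:
  fixes \<Phi> :: "real \<Rightarrow> real" and m :: "complex \<Rightarrow> real" and c0 :: complex
  assumes [measurable]: "\<Phi> \<in> borel_measurable borel" and nn: "\<And>x. 0 \<le> \<Phi> x"
    and r: "0 < r" and r': "0 < r'"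
  defines "v \<equiv> ((r + r')/2)\<^sup>2 / (r * r') - 1"
  shows "(\<integral>\<^sup>+a. (\<integral>\<^sup>+b. ennreal (2 * \<Phi> ((((r + r' + (cmod (a + c0))\<^sup>2)/2)\<^sup>2 + (b + m a)\<^sup>2) / (r * r') - 1)) \<partial>lborel) \<partial>lborel)
    = ennreal (2 * pi * r * r') * (\<integral>\<^sup>+u. ennreal (\<Phi> u * arccos ((1 - u + 2 * v) / (1 + u))) * indicator {v..} u \<partial>lborel)"
proof -
  define K where "K = r + r'"
  define t0 where "t0 = K / 2"
  define R where "R = r * r'"
  have R: "0 < R" unfolding R_def using r r' by simp
  have t0p: "0 < t0" unfolding t0_def K_def using r r' by simp
  have vdef: "v = t0\<^sup>2 / R - 1" unfolding v_def t0_def K_def R_def ..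
  define H where "H s = (\<integral>\<^sup>+b. ennreal (2 * \<Phi> ((((K + s)/2)\<^sup>2 + b\<^sup>2) / R - 1)) \<partial>lborel)" for s
  have Hm[measurable]: "H \<in> borel_measurable borel"
    unfolding H_def by measurable
  define \<psi> where "\<psi> w = ennreal (2 * \<Phi> (w / R - 1))" for w
  have \<psi>m[measurable]: "\<psi> \<in> borel_measurable borel" unfolding \<psi>_def by measurable
  have s1: "(\<integral>\<^sup>+b. ennreal (2 * \<Phi> ((((K + s)/2)\<^sup>2 + (b + c)\<^sup>2) / R - 1)) \<partial>lborel) = H s" for s c
    using nn_integral_real_affine[of "\<lambda>b. ennreal (2 * \<Phi> ((((K + s)/2)\<^sup>2 + b\<^sup>2) / R - 1))" 1 c]
    by (simp add: H_def add.commute)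
  have "(\<integral>\<^sup>+a. (\<integral>\<^sup>+b. ennreal (2 * \<Phi> ((((r + r' + (cmod (a + c0))\<^sup>2)/2)\<^sup>2 + (b + m a)\<^sup>2) / (r * r') - 1)) \<partial>lborel) \<partial>lborel)
      = (\<integral>\<^sup>+a. H ((cmod (c0 + a))\<^sup>2) \<partial>lborel)"
  proof (intro nn_integral_cong)
    fix a
    show "(\<integral>\<^sup>+b. ennreal (2 * \<Phi> ((((r + r' + (cmod (a + c0))\<^sup>2)/2)\<^sup>2 + (b + m a)\<^sup>2) / (r * r') - 1)) \<partial>lborel)
       = H ((cmod (c0 + a))\<^sup>2)"
      using s1[of "(cmod (c0 + a))\<^sup>2" "m a"] unfolding K_def R_def by (simp add: add.commute)
  qed
  also have "\<dots> = (\<integral>\<^sup>+a. H ((cmod a)\<^sup>2) \<partial>distr lborel borel ((+) c0))"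
    by (rule nn_integral_distr[symmetric]) measurable
  also have "\<dots> = (\<integral>\<^sup>+a. H ((cmod a)\<^sup>2) \<partial>lborel)"
    by (simp add: lborel_distr_plus)
  also have "\<dots> = (\<integral>\<^sup>+x. (\<integral>\<^sup>+y. H (x\<^sup>2 + y\<^sup>2) \<partial>lborel) \<partial>lborel)"
    by (subst nn_integral_complex) (auto simp: cmod_power2)
  also have "\<dots> = ennreal pi * (\<integral>\<^sup>+s. H s * indicator {0..} s \<partial>lborel)"
    by (rule radial) measurable
  also have "(\<integral>\<^sup>+s. H s * indicator {0..} s \<partial>lborel) = ennreal 2 * (\<integral>\<^sup>+t. H (- K + 2 * t) * indicator {0..} (- K + 2 * t) \<partial>lborel)"
    using nn_integral_real_affine[of "\<lambda>s. H s * indicator {0..} s" 2 "-K"] by simp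
  also have "(\<integral>\<^sup>+t. H (- K + 2 * t) * indicator {0..} (- K + 2 * t) \<partial>lborel)
      = (\<integral>\<^sup>+t. indicator {t0..} t * (\<integral>\<^sup>+b. \<psi> (t\<^sup>2 + b\<^sup>2) \<partial>lborel) \<partial>lborel)"
    by (intro nn_integral_cong) (auto simp: H_def \<psi>_def t0_def split: split_indicator)
  also have "ennreal 2 * \<dots> = (\<integral>\<^sup>+w. \<psi> w * (\<integral>\<^sup>+s. ennreal (1/(1+s\<^sup>2)) * indicator {t0\<^sup>2 * (1+s\<^sup>2)..} w \<partial>lborel) \<partial>lborel)"
    using half2[OF \<psi>m, of t0] t0p by simp
  also have "\<dots> = (\<integral>\<^sup>+w. \<psi> w * (if t0\<^sup>2 \<le> w then ennreal (2 * arctan (sqrt (w / t0\<^sup>2 - 1))) else 0) \<partial>lborel)"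
    by (simp add: eval_pos[OF t0p])
  also have "\<dots> = ennreal R * (\<integral>\<^sup>+u. \<psi> (R + R * u) * (if t0\<^sup>2 \<le> R + R * u then ennreal (2 * arctan (sqrt ((R + R * u) / t0\<^sup>2 - 1))) else 0) \<partial>lborel)"
    using nn_integral_real_affine[of "\<lambda>w. \<psi> w * (if t0\<^sup>2 \<le> w then ennreal (2 * arctan (sqrt (w / t0\<^sup>2 - 1))) else 0)" R R] R
    by simp
  also have "(\<integral>\<^sup>+u. \<psi> (R + R * u) * (if t0\<^sup>2 \<le> R + R * u then ennreal (2 * arctan (sqrt ((R + R * u) / t0\<^sup>2 - 1))) else 0) \<partial>lborel)
     = (\<integral>\<^sup>+u. 2 * (ennreal (\<Phi> u * arccos ((1 - u + 2 * v) / (1 + u))) * indicator {v..} u) \<partial>lborel)"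
  proof (intro nn_integral_cong)
    fix u :: real
    show "\<psi> (R + R * u) * (if t0\<^sup>2 \<le> R + R * u then ennreal (2 * arctan (sqrt ((R + R * u) / t0\<^sup>2 - 1))) else 0)
       = 2 * (ennreal (\<Phi> u * arccos ((1 - u + 2 * v) / (1 + u))) * indicator {v..} u)"
    proof (cases "v \<le> u")
      case True
      have le: "t0\<^sup>2 \<le> R + R * u" using True R unfolding vdef by (simp add: field_simps)
      have u1: "0 < 1 + u" using True t0p R unfolding vdef
        by (smt (verit) divide_pos_pos zero_less_power)
      have Rp: "0 < R + R * u"
      proof -
        have "0 < R * (1 + u)" using R u1 by simp
        then show ?thesis by (simp add: algebra_simps)
      qed
      define q where "q = t0\<^sup>2 / (R + R * u)"
      have q0: "0 < q" proof -
        have "0 < R * (1 + u)" using R u1 by simp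
        then show ?thesis unfolding q_def using t0p by (simp add: algebra_simps)
      qed
      have q1: "q \<le> 1" unfolding q_def using le Rp by (simp add: divide_le_eq_1)
      have e1: "(R + R * u) / t0\<^sup>2 = 1 / q" unfolding q_def by simp
      have e2: "(1 - u + 2 * v) / (1 + u) = 2 * q - 1"
        unfolding q_def vdef using R u1 Rp by (simp add: field_simps)
      have ac: "2 * arctan (sqrt ((R + R * u) / t0\<^sup>2 - 1)) = arccos ((1 - u + 2 * v) / (1 + u))"
        unfolding e1 e2 by (rule arcid[OF q0 q1])
      have a0: "0 \<le> arccos ((1 - u + 2 * v) / (1 + u))"
        unfolding e2 using q0 q1 by (intro arccos_lbound) auto
      have ps: "\<psi> (R + R * u) = ennreal (2 * \<Phi> u)" unfolding \<psi>_def using R by (simp add: field_simps)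
      show ?thesis using le True nn a0
        by (simp add: ps ac ennreal_mult[symmetric] mult_ac ennreal_2x')
    next
      case False
      have "\<not> t0\<^sup>2 \<le> R + R * u" using False R unfolding vdef by (simp add: field_simps)
      then show ?thesis using False by simp
    qed
  qed
  also have "\<dots> = 2 * (\<integral>\<^sup>+u. ennreal (\<Phi> u * arccos ((1 - u + 2 * v) / (1 + u))) * indicator {v..} u \<partial>lborel)"
  proof (rule nn_integral_cmult)
    have "-1 < v" unfolding vdef using t0p R by simp
    then show "(\<lambda>u. ennreal (\<Phi> u * arccos ((1 - u + 2 * v) / (1 + u))) * indicator {v..} u) \<in> borel_measurable lborel"
      using meas_enn[of \<Phi> v] by simp
  qed
  finally have fin: "(\<integral>\<^sup>+a. (\<integral>\<^sup>+b. ennreal (2 * \<Phi> ((((r + r' + (cmod (a + c0))\<^sup>2)/2)\<^sup>2 + (b + m a)\<^sup>2) / (r * r') - 1)) \<partial>lborel) \<partial>lborel)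
    = ennreal pi * (ennreal R * (2 * (\<integral>\<^sup>+u. ennreal (\<Phi> u * arccos ((1 - u + 2 * v) / (1 + u))) * indicator {v..} u \<partial>lborel)))"
    by (simp add: mult_ac)
  have "ennreal (2 * pi * r * r') = ennreal pi * (ennreal R * 2)"
    using R by (simp add: R_def ennreal_mult[symmetric] ennreal_2x[symmetric] mult_ac)
  then show ?thesis unfolding fin by (simp add: mult_ac)
qed

lemma siegel_rho: "Z \<in> Siegel2 \<Longrightarrow> 0 < rhoZ Z"
  by (cases Z) (simp add: Siegel2_def rhoZ_def rhoZW_def mult.commute)

lemma Xfin:
  fixes \<Phi> :: "real \<Rightarrow> real"
  assumes cont: "continuous_on UNIV \<Phi>" and cS: "compact (closure {x. \<Phi> x \<noteq> 0})"
    and nn: "\<And>x. 0 \<le> \<Phi> x" and v: "-1 < v"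
  shows "(\<integral>\<^sup>+u. ennreal (\<Phi> u * arccos ((1 - u + 2 * v) / (1 + u))) * indicator {v..} u \<partial>lborel) < \<infinity>"
proof -
  define S where "S = closure {x. \<Phi> x \<noteq> 0}"
  have "bounded (\<Phi> ` S)"
    unfolding S_def by (rule compact_imp_bounded[OF compact_continuous_image[OF continuous_on_subset[OF cont] cS]]) auto
  then obtain B where B0: "\<forall>y\<in>\<Phi> ` S. norm y \<le> B" unfolding bounded_iff by blast
  have B: "\<bar>\<Phi> x\<bar> \<le> B" if "x \<in> S" for x using B0 that by simp
  have le: "ennreal (\<Phi> u * arccos ((1 - u + 2 * v) / (1 + u))) * indicator {v..} u \<le> ennreal (B * pi) * indicator S u" for u
  proof (cases "v \<le> u")
    case True
    have a: "0 \<le> arccos ((1 - u + 2 * v) / (1 + u)) \<and> arccos ((1 - u + 2 * v) / (1 + u)) \<le> pi"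
      using rng[OF v True] by (intro arccos_bounded) auto
    show ?thesis
    proof (cases "u \<in> S")
      case True
      have "\<Phi> u * arccos ((1 - u + 2 * v) / (1 + u)) \<le> B * pi"
        using B[OF True] a nn[of u] by (intro mult_mono) auto
      then show ?thesis using True \<open>v \<le> u\<close> by (auto intro: ennreal_leI)
    next
      case False
      then have "\<Phi> u = 0" unfolding S_def by (metis (mono_tags) mem_Collect_eq subsetD closure_subset)
      then show ?thesis by simp
    qed
  qed simp
  have "(\<integral>\<^sup>+u. ennreal (\<Phi> u * arccos ((1 - u + 2 * v) / (1 + u))) * indicator {v..} u \<partial>lborel)
      \<le> (\<integral>\<^sup>+u. ennreal (B * pi) * indicator S u \<partial>lborel)"
    by (intro nn_integral_mono le)
  also have "\<dots> = ennreal (B * pi) * emeasure lborel S"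
    by (rule nn_integral_cmult_indicator) (auto simp: S_def intro: borel_closed)
  also have "\<dots> < \<infinity>"
    using emeasure_bounded_finite[OF compact_imp_bounded[OF cS]] unfolding S_def
    by (simp add: ennreal_mult_less_top)
  finally show ?thesis .
qed

theorem theorem2p3:
  fixes \<Phi> :: "real \<Rightarrow> real" and Z Z' :: "complex \<times> complex"
  assumes "C2c \<Phi>"
    and "\<And>x. \<Phi> x \<ge> 0"
    and "Z \<in> Siegel2" and "Z' \<in> Siegel2"
  shows "(LINT b|lborel. LINT a|lborel. 2 * kern \<Phi> Z (nact a b Z'))
         = 2 * pi * rhoZ Z * rhoZ Z' * gfun \<Phi> (ln (rhoZ Z') - ln (rhoZ Z))"
proof -
  note nn = assms(2)
  obtain \<Phi>' where d: "\<And>x. (\<Phi> has_real_derivative \<Phi>' x) (at x)" and cS: "compact (closure {x. \<Phi> x \<noteq> 0})"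
    using assms(1) unfolding C2c_def by blast
  have cont: "continuous_on UNIV \<Phi>"
    by (rule continuous_at_imp_continuous_on) (use d DERIV_isCont in blast)
  have [measurable]: "\<Phi> \<in> borel_measurable borel" by (rule borel_measurable_continuous_onI[OF cont])
  define r where "r = rhoZ Z"
  define r' where "r' = rhoZ Z'"
  have r: "0 < r" and r': "0 < r'" unfolding r_def r'_def using assms(3,4) siegel_rho by auto
  define c0 where "c0 = cnj (snd Z' - snd Z)"
  define m where "m a = Im (cnj (fst Z) + fst Z' + a * snd Z' - cnj (snd Z) * snd Z' - cnj (snd Z) * cnj a)" for a
  define v where "v = ((r + r')/2)\<^sup>2 / (r * r') - 1"
  have v1: "-1 < v" unfolding v_def using r r' by simp
  define X where "X = (\<integral>\<^sup>+u. ennreal (\<Phi> u * arccos ((1 - u + 2 * v) / (1 + u))) * indicator {v..} u \<partial>lborel)"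
  have Xf: "X < \<infinity>" unfolding X_def by (rule Xfin[OF cont cS nn v1])
  have kern_eq: "kern \<Phi> Z (nact a b Z') = \<Phi> ((((r + r' + (cmod (a + c0))\<^sup>2)/2)\<^sup>2 + (b + m a)\<^sup>2) / (r * r') - 1)" for a b
    unfolding kern_def uZW_def cmod_power2 re_rho im_rho rho_nact r_def r'_def c0_def m_def ..
  define N where "N b = (\<integral>\<^sup>+a. ennreal (2 * kern \<Phi> Z (nact a b Z')) \<partial>lborel)" for b
  have Nm: "N \<in> borel_measurable lborel"
    unfolding N_def kern_def uZW_def rhoZW_def rhoZ_def nact_def by measurable
  have tot: "(\<integral>\<^sup>+b. N b \<partial>lborel) = ennreal (2 * pi * r * r') * X"
  proof -
    have "(\<integral>\<^sup>+b. N b \<partial>lborel) = (\<integral>\<^sup>+a. (\<integral>\<^sup>+b. ennreal (2 * kern \<Phi> Z (nact a b Z')) \<partial>lborel) \<partial>lborel)"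
      unfolding N_def by (rule lborel_pair.Fubini'[OF meas_test]) measurable
    also have "\<dots> = ennreal (2 * pi * r * r') * X"
      unfolding kern_eq X_def v_def by (rule core_nn[OF _ nn r r']) measurable
    finally show ?thesis .
  qed
  have inner: "(LINT a|lborel. 2 * kern \<Phi> Z (nact a b Z')) = enn2real (N b)" for b
    unfolding N_def
  proof (rule integral_eq_nn_integral)
    show "(\<lambda>a. 2 * kern \<Phi> Z (nact a b Z')) \<in> borel_measurable lborel"
      unfolding kern_def uZW_def rhoZW_def rhoZ_def nact_def by measurable
  qed (simp add: kern_def nn)
  have "(LINT b|lborel. LINT a|lborel. 2 * kern \<Phi> Z (nact a b Z')) = (LINT b|lborel. enn2real (N b))"
    by (rule Bochner_Integration.integral_cong[OF refl]) (rule inner)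
  also have "\<dots> = enn2real (\<integral>\<^sup>+b. ennreal (enn2real (N b)) \<partial>lborel)"
    by (rule integral_eq_nn_integral) (use Nm in auto)
  also have "(\<integral>\<^sup>+b. ennreal (enn2real (N b)) \<partial>lborel) = (\<integral>\<^sup>+b. N b \<partial>lborel)"
  proof (rule nn_integral_cong_AE)
    have "AE b in lborel. N b \<noteq> \<infinity>"
      by (rule nn_integral_PInf_AE[OF Nm]) (use Xf in \<open>simp add: tot ennreal_mult_eq_top_iff top.not_eq_extremum\<close>)
    then show "AE b in lborel. ennreal (enn2real (N b)) = N b"
      by (elim eventually_mono) (simp add: less_top)
  qed
  also have "enn2real (\<integral>\<^sup>+b. N b \<partial>lborel) = 2 * pi * r * r' * enn2real X"
    using r r' by (simp add: tot enn2real_mult)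
  also have "enn2real X = Pfun \<Phi> v"
  proof -
    have nnf: "0 \<le> indicator {v..} u *\<^sub>R (\<Phi> u * arccos ((1 - u + 2 * v) / (1 + u)))" for u
    proof (cases "v \<le> u")
      case True
      have "0 \<le> arccos ((1 - u + 2 * v) / (1 + u))"
        using rng[OF v1 True] by (intro arccos_lbound) auto
      then show ?thesis using True nn[of u] by simp
    qed simp
    have "Pfun \<Phi> v = enn2real (\<integral>\<^sup>+u. ennreal (indicator {v..} u *\<^sub>R (\<Phi> u * arccos ((1 - u + 2 * v) / (1 + u)))) \<partial>lborel)"
      unfolding Pfun_def set_lebesgue_integral_def
      by (rule integral_eq_nn_integral) (use meas_real[OF _ v1, of \<Phi>] nnf in auto)
    also have "(\<integral>\<^sup>+u. ennreal (indicator {v..} u *\<^sub>R (\<Phi> u * arccos ((1 - u + 2 * v) / (1 + u)))) \<partial>lborel) = X"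
      unfolding X_def by (intro nn_integral_cong) (simp split: split_indicator)
    finally show ?thesis by simp
  qed
  also have "Pfun \<Phi> v = gfun \<Phi> (ln r' - ln r)"
  proof -
    have "(exp (ln r' - ln r) + exp (- (ln r' - ln r)) - 2) / 4 = v"
      using r r' unfolding v_def by (simp add: exp_diff field_simps power2_eq_square)
    then show ?thesis unfolding gfun_def by simp
  qed
  finally show ?thesis unfolding r_def r'_def .
qed

end
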